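(* Let $G$ be a connected graph on an odd number $n\geq 3$ of vertices. If there is a vertex $v\in V(G)$ such that each distance set $N_i(v)$, $i=1,\dots,\epsilon(v)$, is an independent set, then $q(G)\geq 3$.
   Context: For a graph $G$ on $n$ vertices, $\mathcal{S}(G)$ is the set of real symmetric $n\times n$ matrices $A=[a_{ij}]$ with $a_{ij}\neq0$ for $i\ne j$ iff $\{i,j\}\in E(G)$ (diagonal unrestricted); $q(G)$ is the minimum number of distinct eigenvalues of a matrix in $\mathcal{S}(G)$. $N_i(v)$ is the set of vertices at distance exactly $i$ from $v$, and $\epsilon(v)$ is the maximum distance from $v$ to a vertex of $G$. *)

theory Defs
  imports "HOL-Analysis.Analysis"
begin

text \<open>A finite simple graph on the vertex type 'n (vertex set = UNIV, n = CARD('n)),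
  given by a symmetric irreflexive adjacency relation E.\<close>

definition simple_graph :: "('n \<Rightarrow> 'n \<Rightarrow> bool) \<Rightarrow> bool" where
  "simple_graph E \<longleftrightarrow> (\<forall>u v. E u v \<longrightarrow> E v u) \<and> (\<forall>u. \<not> E u u)"

definition graph_connected :: "('n \<Rightarrow> 'n \<Rightarrow> bool) \<Rightarrow> bool" where
  "graph_connected E \<longleftrightarrow> (\<forall>u v. E\<^sup>*\<^sup>* u v)"

definition gdist :: "('n \<Rightarrow> 'n \<Rightarrow> bool) \<Rightarrow> 'n \<Rightarrow> 'n \<Rightarrow> nat" where
  "gdist E u v = (LEAST k. (E ^^ k) u v)"

definition dist_set :: "('n \<Rightarrow> 'n \<Rightarrow> bool) \<Rightarrow> nat \<Rightarrow> 'n \<Rightarrow> 'n set" where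
  "dist_set E i v = {u. gdist E v u = i}"

definition ecc :: "('n::finite \<Rightarrow> 'n \<Rightarrow> bool) \<Rightarrow> 'n \<Rightarrow> nat" where
  "ecc E v = Max (range (gdist E v))"

definition independent_set :: "('n \<Rightarrow> 'n \<Rightarrow> bool) \<Rightarrow> 'n set \<Rightarrow> bool" where
  "independent_set E S \<longleftrightarrow> (\<forall>u\<in>S. \<forall>w\<in>S. \<not> E u w)"

definition sym_pattern :: "('n::finite \<Rightarrow> 'n \<Rightarrow> bool) \<Rightarrow> (real^'n^'n) set" where
  "sym_pattern E = {A. transpose A = A \<and> (\<forall>i j. i \<noteq> j \<longrightarrow> (A $ i $ j \<noteq> 0 \<longleftrightarrow> E i j))}"

definition eigenvalues :: "real^'n^'n \<Rightarrow> real set" where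
  "eigenvalues A = {c. \<exists>x. x \<noteq> 0 \<and> A *v x = c *\<^sub>R x}"

definition q_min :: "('n::finite \<Rightarrow> 'n \<Rightarrow> bool) \<Rightarrow> nat" where
  "q_min E = (LEAST k. \<exists>A\<in>sym_pattern E. card (eigenvalues A) = k)"

end

theory Submission imports Defs begin

lemma sym_dot:
  fixes A :: "real^'n^'n"
  assumes "transpose A = A"
  shows "x \<bullet> (A *v y) = (A *v x) \<bullet> y"
  by (metis assms dot_lmul_matrix transpose_matrix_vector)

lemma eig_in_invariant:
  fixes A :: "real^'n^'n"
  assumes symA: "transpose A = A" and W: "subspace W" and ne: "\<exists>w\<in>W. w \<noteq> 0"
    and inv: "\<And>y. y \<in> W \<Longrightarrow> A *v y \<in> W"
  shows "\<exists>x\<in>W. x \<noteq> 0 \<and> (\<exists>c. A *v x = c *\<^sub>R x)"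
proof -
  define S where "S = W \<inter> sphere 0 1"
  have cS: "compact S" unfolding S_def using closed_subspace[OF W] by (simp add: closed_Int_compact)
  obtain w where w: "w \<in> W" "w \<noteq> 0" using ne by blast
  have "(1 / norm w) *\<^sub>R w \<in> S" unfolding S_def using w W
    by (simp add: subspace_scale)
  hence neS: "S \<noteq> {}" by blast
  have cont: "continuous_on S (\<lambda>y. y \<bullet> (A *v y))"
    by (intro continuous_intros linear_continuous_on) (auto simp: matrix_vector_mul_linear bounded_linear_inner_right)
  obtain x where xS: "x \<in> S" and xmax: "\<And>y. y \<in> S \<Longrightarrow> y \<bullet> (A *v y) \<le> x \<bullet> (A *v x)"
    using continuous_attains_sup[OF cS neS cont] by blast
  define M where "M = x \<bullet> (A *v x)"
  have xW: "x \<in> W" and nx: "norm x = 1" using xS by (auto simp: S_def)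
  have xx: "x \<bullet> x = 1" using nx by (simp add: norm_eq_1)
  have rpos: "y \<bullet> (A *v y) \<le> M * (y \<bullet> y)" if yW: "y \<in> W" for y
  proof (cases "y = 0")
    case True then show ?thesis by simp
  next
    case False
    define z where "z = (1 / norm y) *\<^sub>R y"
    have "z \<in> S" unfolding S_def z_def using yW W False by (simp add: subspace_scale)
    hence "z \<bullet> (A *v z) \<le> M" using xmax M_def by blast
    moreover have "z \<bullet> (A *v z) = (y \<bullet> (A *v y)) / (norm y)^2"
      unfolding z_def by (simp add: matrix_vector_mult_scaleR power2_eq_square)
    moreover have "y \<bullet> y = (norm y)^2" by (simp add: power2_norm_eq_inner)
    moreover have "(norm y)^2 > 0" using False by simp
    ultimately show ?thesis by (simp add: divide_le_eq mult.commute)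
  qed
  define u where "u = A *v x - M *\<^sub>R x"
  have uW: "u \<in> W" unfolding u_def using inv[OF xW] xW W by (simp add: subspace_diff subspace_scale)
  have xu: "x \<bullet> u = 0" unfolding u_def M_def using xx by (simp add: inner_diff_right)
  have "u = 0"
  proof (rule ccontr)
    assume un: "u \<noteq> 0"
    define r where "r = M * (u \<bullet> u) - u \<bullet> (A *v u)"
    have r0: "r \<ge> 0" using rpos[OF uW] unfolding r_def by simp
    have uu: "u \<bullet> u > 0" using un by simp
    define t where "t = (u \<bullet> u) / (r + 1)"
    have t0: "t > 0" unfolding t_def using uu r0 by simp
    have tr: "t * r < u \<bullet> u" unfolding t_def using uu r0
      by (simp add: field_simps)
    have Axu: "(A *v x) \<bullet> u = u \<bullet> u + M * (x \<bullet> u)"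
      unfolding u_def by (simp add: inner_diff_left inner_commute)
    have sd: "x \<bullet> (A *v u) = (A *v x) \<bullet> u" using sym_dot[OF symA] by blast
    have "x + t *\<^sub>R u \<in> W" using xW uW W by (simp add: subspace_add subspace_scale)
    from rpos[OF this]
    have "(x + t *\<^sub>R u) \<bullet> (A *v (x + t *\<^sub>R u)) \<le> M * ((x + t *\<^sub>R u) \<bullet> (x + t *\<^sub>R u))" .
    moreover have "(x + t *\<^sub>R u) \<bullet> (A *v (x + t *\<^sub>R u)) =
       M + 2 * t * (u \<bullet> u) + t^2 * (u \<bullet> (A *v u))"
      using sd Axu xu M_def
      by (simp add: matrix_vector_right_distrib matrix_vector_mult_scaleR inner_add_left inner_add_right
          inner_commute power2_eq_square algebra_simps)
    moreover have "(x + t *\<^sub>R u) \<bullet> (x + t *\<^sub>R u) = 1 + t^2 * (u \<bullet> u)"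
      using xx xu by (simp add: inner_add_left inner_add_right inner_commute power2_eq_square algebra_simps)
    ultimately have "M + 2 * t * (u \<bullet> u) + t^2 * (u \<bullet> (A *v u)) \<le> M * (1 + t^2 * (u \<bullet> u))"
      by metis
    hence "2 * t * (u \<bullet> u) \<le> t^2 * r" unfolding r_def by (simp add: algebra_simps)
    hence "2 * (u \<bullet> u) \<le> t * r" using t0 by (simp add: power2_eq_square)
    thus False using tr uu by simp
  qed
  hence "A *v x = M *\<^sub>R x" unfolding u_def by simp
  moreover have "x \<noteq> 0" using nx by auto
  ultimately show ?thesis using xW by blast
qed

lemma eig_finite:
  fixes A :: "real^'n^'n"
  assumes symA: "transpose A = A"
  shows "finite (eigenvalues A)"
proof -
  define ev where "ev c = (SOME x. x \<noteq> 0 \<and> A *v x = c *\<^sub>R x)" for c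
  have ev: "ev c \<noteq> 0 \<and> A *v ev c = c *\<^sub>R ev c" if "c \<in> eigenvalues A" for c
  proof -
    have "\<exists>x. x \<noteq> 0 \<and> A *v x = c *\<^sub>R x" using that unfolding eigenvalues_def by blast
    from someI_ex[OF this] show ?thesis unfolding ev_def .
  qed
  have inj: "inj_on ev (eigenvalues A)"
  proof (rule inj_onI)
    fix c d assume c: "c \<in> eigenvalues A" and d: "d \<in> eigenvalues A" and e: "ev c = ev d"
    have "c *\<^sub>R ev c = d *\<^sub>R ev c" using ev[OF c] ev[OF d] e by metis
    thus "c = d" using ev[OF c] by (simp add: scaleR_cancel_right)
  qed
  have orth: "pairwise orthogonal (ev ` eigenvalues A)"
  proof (clarsimp simp: pairwise_def)
    fix c d assume c: "c \<in> eigenvalues A" and d: "d \<in> eigenvalues A" and ne: "ev c \<noteq> ev d"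
    hence cd: "c \<noteq> d" by blast
    have "c * (ev c \<bullet> ev d) = (A *v ev c) \<bullet> ev d" using ev[OF c] by simp
    also have "\<dots> = ev c \<bullet> (A *v ev d)" using sym_dot[OF symA] by metis
    also have "\<dots> = d * (ev c \<bullet> ev d)" using ev[OF d] by simp
    finally have "(c - d) * (ev c \<bullet> ev d) = 0" by (simp add: algebra_simps)
    thus "orthogonal (ev c) (ev d)" using cd by (simp add: orthogonal_def)
  qed
  have "0 \<notin> ev ` eigenvalues A" using ev by force
  hence "independent (ev ` eigenvalues A)" using pairwise_orthogonal_independent orth by blast
  hence "finite (ev ` eigenvalues A)" using independent_bound by blast
  thus ?thesis using finite_imageD inj by blast
qed

lemma two_eig_quadratic:
  fixes A :: "real^'n^'n"
  assumes symA: "transpose A = A" and sub: "eigenvalues A \<subseteq> {l, m}"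
  shows "A *v (A *v z) = (l + m) *\<^sub>R (A *v z) - (l * m) *\<^sub>R z"
proof -
  define Cf where "Cf z = A *v (A *v z) - (l + m) *\<^sub>R (A *v z) + (l * m) *\<^sub>R z" for z
  have lin: "linear Cf"
    by (rule linearI) (simp_all add: Cf_def algebra_simps)
  have W: "subspace (range Cf)" by (metis lin linear_subspace_image subspace_UNIV)
  have comm: "A *v Cf z = Cf (A *v z)" for z by (simp add: Cf_def algebra_simps)
  have symC: "x \<bullet> Cf y = Cf x \<bullet> y" for x y
    using sym_dot[OF symA] by (simp add: Cf_def inner_diff_left inner_diff_right inner_add_left inner_add_right)
  have "Cf z = 0"
  proof (rule ccontr)
    assume nz: "Cf z \<noteq> 0"
    have "\<exists>x\<in>range Cf. x \<noteq> 0 \<and> (\<exists>c. A *v x = c *\<^sub>R x)"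
      by (rule eig_in_invariant[OF symA W]) (use nz comm in auto)
    then obtain w c where x: "Cf w \<noteq> 0" "A *v Cf w = c *\<^sub>R Cf w" by blast
    have "c \<in> eigenvalues A" using x unfolding eigenvalues_def by blast
    hence "c = l \<or> c = m" using sub by blast
    have "Cf (Cf w) = (c * c - (l + m) * c + l * m) *\<^sub>R Cf w"
      unfolding Cf_def[of "Cf w"] using x(2) by (simp add: algebra_simps)
    also have "c * c - (l + m) * c + l * m = 0" using \<open>c = l \<or> c = m\<close> by (auto simp: algebra_simps)
    finally have "Cf (Cf w) = 0" by simp
    hence "Cf w \<bullet> Cf w = 0" using symC[of w "Cf w"] by simp
    thus False using x(1) by simp
  qed
  thus ?thesis unfolding Cf_def by (simp add: algebra_simps)
qed


lemma gdist_walk: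
  assumes "graph_connected E"
  shows "(E ^^ gdist E v u) v u"
proof -
  have "\<exists>k. (E ^^ k) v u" using assms rtranclp_power unfolding graph_connected_def by metis
  thus ?thesis unfolding gdist_def by (rule LeastI_ex)
qed

lemma gdist_le: "(E ^^ k) v u \<Longrightarrow> gdist E v u \<le> k"
  unfolding gdist_def by (rule Least_le)

lemma gdist_0: "gdist E v u = 0 \<Longrightarrow> graph_connected E \<Longrightarrow> u = v"
  using gdist_walk[of E v u] by simp

lemma gdist_edge:
  assumes "graph_connected E" "E x y"
  shows "gdist E v y \<le> gdist E v x + 1"
proof -
  have "(E ^^ Suc (gdist E v x)) v y" using relpowp_Suc_I[OF gdist_walk[OF assms(1)] assms(2)] .
  thus ?thesis using gdist_le by fastforce
qed

lemma parity_edge: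
  fixes E :: "'n::finite \<Rightarrow> 'n \<Rightarrow> bool"
  assumes sg: "simple_graph E" and con: "graph_connected E"
    and ind: "\<forall>i\<in>{1..ecc E v}. independent_set E (dist_set E i v)"
    and e: "E x y"
  shows "odd (gdist E v x + gdist E v y)"
proof -
  have sym: "E y x" using sg e unfolding simple_graph_def by blast
  have xy: "x \<noteq> y" using sg e unfolding simple_graph_def by blast
  have 1: "gdist E v y \<le> gdist E v x + 1" using gdist_edge[OF con e] .
  have 2: "gdist E v x \<le> gdist E v y + 1" using gdist_edge[OF con sym] .
  have "gdist E v x \<noteq> gdist E v y"
  proof
    assume eq: "gdist E v x = gdist E v y"
    define i where "i = gdist E v x"
    have "i \<noteq> 0" using gdist_0[OF _ con, of v x] gdist_0[OF _ con, of v y] eq xy unfolding i_def by auto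
    moreover have "i \<le> ecc E v" unfolding ecc_def i_def by (rule Max_ge) auto
    ultimately have "independent_set E (dist_set E i v)" using ind by auto
    moreover have "x \<in> dist_set E i v" "y \<in> dist_set E i v" using eq unfolding dist_set_def i_def by auto
    ultimately show False using e unfolding independent_set_def by blast
  qed
  with 1 2 have "gdist E v y = gdist E v x + 1 \<or> gdist E v x = gdist E v y + 1" by linarith
  thus ?thesis by auto
qed

lemma main_contra:
  fixes E :: "'n::finite \<Rightarrow> 'n \<Rightarrow> bool" and A :: "real^'n^'n"
  assumes sg: "simple_graph E" and con: "graph_connected E"
    and oddn: "odd CARD('n)" and n3: "CARD('n) \<ge> 3"
    and ind: "\<forall>i\<in>{1..ecc E v}. independent_set E (dist_set E i v)"
    and AS: "A \<in> sym_pattern E"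
    and quad: "\<And>z. A *v (A *v z) = s *\<^sub>R (A *v z) - p *\<^sub>R z"
  shows False
proof -
  define d where "d u = gdist E v u" for u
  have par: "E x y \<Longrightarrow> odd (d x + d y)" for x y
    unfolding d_def using parity_edge[OF sg con ind] by blast
  have tA: "transpose A = A" using AS unfolding sym_pattern_def by blast
  have symA: "A $ i $ j = A $ j $ i" for i j
  proof -
    have "transpose A $ i $ j = A $ j $ i" by (simp add: transpose_def)
    thus ?thesis using tA by simp
  qed
  have patt: "i \<noteq> j \<Longrightarrow> A $ i $ j \<noteq> 0 \<longleftrightarrow> E i j" for i j
    using AS unfolding sym_pattern_def by blast
  have irr: "\<not> E u u" for u using sg unfolding simple_graph_def by blast
  have entry: "(\<Sum>k\<in>UNIV. A $ i $ k * A $ k $ j) = s * A $ i $ j - (if i = j then p else 0)" for i j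
  proof -
    have c: "A *v axis j 1 = column j A" by (rule matrix_vector_mult_basis)
    have "(A *v (A *v axis j 1)) $ i = (s *\<^sub>R (A *v axis j 1) - p *\<^sub>R axis j 1) $ i"
      using quad by simp
    hence "(A *v column j A) $ i = (s *\<^sub>R column j A - p *\<^sub>R axis j 1) $ i" unfolding c .
    moreover have "(A *v column j A) $ i = (\<Sum>k\<in>UNIV. A $ i $ k * A $ k $ j)"
      by (simp add: matrix_vector_mult_def column_def)
    moreover have "(s *\<^sub>R column j A - p *\<^sub>R axis j 1) $ i = s * A $ i $ j - (if i = j then p else 0)"
      by (simp add: column_def axis_def)
    ultimately show ?thesis by simp
  qed
  have edge_diag: "A $ x $ x + A $ y $ y = s" if e: "E x y" for x y
  proof -
    have xy: "x \<noteq> y" using e irr by blast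
    have z: "A $ x $ k * A $ k $ y = 0" if "k \<in> UNIV - {x, y}" for k
    proof (rule ccontr)
      assume "A $ x $ k * A $ k $ y \<noteq> 0"
      hence "E x k" "E k y" using that patt by auto
      hence "odd (d x + d k)" "odd (d k + d y)" using par by auto
      moreover have "odd (d x + d y)" using par e by blast
      ultimately show False by auto
    qed
    have "(\<Sum>k\<in>UNIV. A $ x $ k * A $ k $ y) = (\<Sum>k\<in>{x,y}. A $ x $ k * A $ k $ y)"
      by (rule sum.mono_neutral_right) (use z in auto)
    also have "\<dots> = A $ x $ y * (A $ x $ x + A $ y $ y)" using xy by (simp add: algebra_simps)
    finally have "A $ x $ y * (A $ x $ x + A $ y $ y) = A $ x $ y * s"
      using entry[of x y] xy by (simp add: mult.commute)
    moreover have "A $ x $ y \<noteq> 0" using patt xy e by blast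
    ultimately show ?thesis by simp
  qed
  define g where "g u = (if even (d u) then A $ u $ u else s - A $ u $ u)" for u
  have gedge: "E x y \<Longrightarrow> g x = g y" for x y
    using edge_diag[of x y] par[of x y] unfolding g_def by auto
  have gconst: "g u = g v" for u
  proof -
    have "E\<^sup>*\<^sup>* v u" using con unfolding graph_connected_def by blast
    thus ?thesis by (induction rule: rtranclp_induct) (use gedge in auto)
  qed
  define t where "t = g v"
  define q where "q = t * t - s * t + p"
  define R where "R u = (\<Sum>k\<in>UNIV. if k \<noteq> u then (A $ u $ k)^2 else 0)" for u
  have Rq: "R u = - q" for u
  proof -
    have "(\<Sum>k\<in>UNIV. A $ u $ k * A $ k $ u) = (\<Sum>k\<in>UNIV. (A $ u $ k)^2)"
      using symA by (simp add: power2_eq_square)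
    also have "\<dots> = (\<Sum>k\<in>UNIV. (if k \<noteq> u then (A $ u $ k)^2 else 0) + (if k = u then (A $ u $ k)^2 else 0))"
      by (rule sum.cong) auto
    also have "\<dots> = R u + (A $ u $ u)^2" unfolding R_def by (simp add: sum.distrib)
    finally have "R u = s * A $ u $ u - p - (A $ u $ u)^2" using entry[of u u] by simp
    moreover have "A $ u $ u = t \<or> A $ u $ u = s - t"
      using gconst[of u] unfolding t_def g_def by (auto split: if_splits)
    ultimately show ?thesis unfolding q_def by (auto simp: power2_eq_square algebra_simps)
  qed
  obtain u where uv: "u \<noteq> v"
  proof -
    have "\<not> UNIV \<subseteq> {v}"
    proof
      assume "UNIV \<subseteq> {v}"
      hence "CARD('n) \<le> card {v}" using card_mono[of "{v}" UNIV] by simp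
      thus False using n3 by simp
    qed
    hence "UNIV - {v} \<noteq> {}" by auto
    thus ?thesis using that by blast
  qed
  have "E\<^sup>*\<^sup>* v u" using con unfolding graph_connected_def by blast
  then obtain w where vw: "E v w" using uv by (metis converse_rtranclpE)
  have vw': "v \<noteq> w" using vw irr by blast
  have "(A $ v $ w)^2 > 0" using patt vw vw' by simp
  also have "(A $ v $ w)^2 \<le> R v" unfolding R_def
    using member_le_sum[of w UNIV "\<lambda>k. if k \<noteq> v then (A $ v $ k)^2 else 0"] vw' by simp
  finally have qneg: "- q > 0" using Rq by simp
  define X where "X = {u. even (d u)}"
  define Y where "Y = {u. odd (d u)}"
  have RX: "R u = (\<Sum>k\<in>Y. (A $ u $ k)^2)" if "u \<in> X" for u
  proof -
    have "R u = (\<Sum>k\<in>Y. if k \<noteq> u then (A $ u $ k)^2 else 0)"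
      unfolding R_def
    proof (rule sum.mono_neutral_right)
      show "\<forall>k\<in>UNIV - Y. (if k \<noteq> u then (A $ u $ k)^2 else 0) = 0"
      proof
        fix k assume "k \<in> UNIV - Y"
        hence "even (d k)" unfolding Y_def by auto
        hence "\<not> E u k" using par[of u k] that unfolding X_def by auto
        thus "(if k \<noteq> u then (A $ u $ k)^2 else 0) = 0" using patt[of u k] by auto
      qed
    qed auto
    also have "\<dots> = (\<Sum>k\<in>Y. (A $ u $ k)^2)"
      by (rule sum.cong) (use that in \<open>auto simp: X_def Y_def\<close>)
    finally show ?thesis .
  qed
  have RY: "R u = (\<Sum>k\<in>X. (A $ u $ k)^2)" if "u \<in> Y" for u
  proof -
    have "R u = (\<Sum>k\<in>X. if k \<noteq> u then (A $ u $ k)^2 else 0)"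
      unfolding R_def
    proof (rule sum.mono_neutral_right)
      show "\<forall>k\<in>UNIV - X. (if k \<noteq> u then (A $ u $ k)^2 else 0) = 0"
      proof
        fix k assume "k \<in> UNIV - X"
        hence "odd (d k)" unfolding X_def by auto
        hence "\<not> E u k" using par[of u k] that unfolding Y_def by auto
        thus "(if k \<noteq> u then (A $ u $ k)^2 else 0) = 0" using patt[of u k] by auto
      qed
    qed auto
    also have "\<dots> = (\<Sum>k\<in>X. (A $ u $ k)^2)"
      by (rule sum.cong) (use that in \<open>auto simp: X_def Y_def\<close>)
    finally show ?thesis .
  qed
  have "real (card X) * (- q) = (\<Sum>u\<in>X. R u)" using Rq by simp
  also have "\<dots> = (\<Sum>u\<in>X. \<Sum>k\<in>Y. (A $ u $ k)^2)" using RX by simp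
  also have "\<dots> = (\<Sum>k\<in>Y. \<Sum>u\<in>X. (A $ u $ k)^2)" by (rule sum.swap)
  also have "\<dots> = (\<Sum>k\<in>Y. \<Sum>u\<in>X. (A $ k $ u)^2)" using symA by simp
  also have "\<dots> = (\<Sum>k\<in>Y. R k)" using RY by simp
  also have "\<dots> = real (card Y) * (- q)" using Rq by simp
  finally have "card X = card Y" using qneg by simp
  moreover have "card X + card Y = CARD('n)"
  proof -
    have "X \<union> Y = UNIV" "X \<inter> Y = {}" unfolding X_def Y_def by auto
    thus ?thesis using card_Un_disjoint[of X Y] by simp
  qed
  ultimately have "CARD('n) = 2 * card X" by simp
  thus False using oddn by simp
qed

lemma card_le2:
  assumes "finite S" "card S \<le> 2"
  shows "\<exists>l m. S \<subseteq> {l, m}"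
proof -
  have "card S = 0 \<or> card S = 1 \<or> card S = 2" using assms(2) by auto
  thus ?thesis
  proof (elim disjE)
    assume "card S = 0" thus ?thesis using assms(1) by auto
  next
    assume "card S = 1" thus ?thesis by (auto simp: card_1_singleton_iff)
  next
    assume "card S = 2" thus ?thesis by (auto simp: card_2_iff)
  qed
qed

theorem mainTheorem10:
  fixes E :: "'n::finite \<Rightarrow> 'n \<Rightarrow> bool"
  assumes "simple_graph E"
    and "graph_connected E"
    and "odd CARD('n)"
    and "CARD('n) \<ge> 3"
    and "\<exists>v. \<forall>i\<in>{1..ecc E v}. independent_set E (dist_set E i v)"
  shows "q_min E \<ge> 3"
proof -
  obtain v where v: "\<forall>i\<in>{1..ecc E v}. independent_set E (dist_set E i v)" using assms(5) by blast
  have ge: "card (eigenvalues A) \<ge> 3" if A: "A \<in> sym_pattern E" for A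
  proof (rule ccontr)
    assume "\<not> card (eigenvalues A) \<ge> 3"
    hence le: "card (eigenvalues A) \<le> 2" by simp
    have tA: "transpose A = A" using A unfolding sym_pattern_def by blast
    obtain l m where "eigenvalues A \<subseteq> {l, m}" using card_le2[OF eig_finite[OF tA] le] by blast
    from two_eig_quadratic[OF tA this]
    have "\<And>z. A *v (A *v z) = (l + m) *\<^sub>R (A *v z) - (l * m) *\<^sub>R z" .
    from main_contra[OF assms(1-4) v A this] show False .
  qed
  define A0 :: "real^'n^'n" where "A0 = (\<chi> i j. if E i j then 1 else 0)"
  have "A0 \<in> sym_pattern E"
    unfolding sym_pattern_def A0_def using assms(1)
    by (auto simp: transpose_def vec_eq_iff simple_graph_def)
  hence ex: "\<exists>k. \<exists>A\<in>sym_pattern E. card (eigenvalues A) = k" by blast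
  have "\<exists>A\<in>sym_pattern E. card (eigenvalues A) = q_min E"
    unfolding q_min_def by (rule LeastI_ex[OF ex])
  thus ?thesis using ge by metis
qed

end
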